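(* For continuous functions defined using arithmetic circuits, the sequence of fixpoints along the path given by the linear homotopy $\mathcal{F}_t=(1-t)\mathcal{F}_0+t\mathcal{F}_1$ can have exponentially many alternations of the value of $t$: there are, for each $n$, continuous functions $\mathcal{F}_0,\mathcal{F}_1:[0,1]^3\to[0,1]^3$ computed by linear arithmetic circuits of size polynomial in $n$, with $\mathcal{F}_0$ having a unique fixpoint, such that along the path of fixpoints of $\mathcal{F}_t$ starting at the fixpoint of $\mathcal{F}_0$ (at $t=0$) and ending at a fixpoint of $\mathcal{F}_1$ (at $t=1$), the parameter $t$ changes direction a number of times exponential in $n$.
   Context: A linear arithmetic circuit computes a function $[0,1]^3\to[0,1]^3$ using gates whose inputs and outputs lie in $[0,1]$ (results truncated to $[0,1]$): sum, difference, max, min of two inputs, multiplication of an input by a constant, constants, and comparator gates (output $1$ if first input exceeds second, $0$ if smaller, arbitrary if equal). The path of fixpoints is a connected set of pairs $(x,t)$ with $\mathcal{F}_t(x)=x$. *)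

theory Defs
  imports "HOL-Analysis.Analysis"
begin

text \<open>Linear arithmetic circuits with three inputs (nodes 0,1,2) and gates
  numbered 3,4,...; gate number k (0-based in the gate list) is node 3+k and may
  only refer to nodes of smaller index.\<close>

datatype gate =
    GAdd nat nat
  | GSub nat nat
  | GMax nat nat
  | GMin nat nat
  | GScale rat nat
  | GConst rat
  | GCmp nat nat

record circuit =
  gates :: "gate list"
  outs  :: "nat \<times> nat \<times> nat"

definition trunc01 :: "real \<Rightarrow> real" where
  "trunc01 v = max 0 (min 1 v)"

fun gate_args :: "gate \<Rightarrow> nat list" where
  "gate_args (GAdd i j) = [i, j]"
| "gate_args (GSub i j) = [i, j]"
| "gate_args (GMax i j) = [i, j]"
| "gate_args (GMin i j) = [i, j]"
| "gate_args (GScale c i) = [i]"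
| "gate_args (GConst c) = []"
| "gate_args (GCmp i j) = [i, j]"

definition wf_circuit :: "circuit \<Rightarrow> bool" where
  "wf_circuit C \<longleftrightarrow>
     (\<forall>k < length (gates C). \<forall>i \<in> set (gate_args (gates C ! k)). i < 3 + k) \<and>
     (case outs C of (a, b, c) \<Rightarrow>
        a < 3 + length (gates C) \<and> b < 3 + length (gates C) \<and> c < 3 + length (gates C))"

fun gate_ok :: "(nat \<Rightarrow> real) \<Rightarrow> gate \<Rightarrow> real \<Rightarrow> bool" where
  "gate_ok val (GAdd i j) v = (v = trunc01 (val i + val j))"
| "gate_ok val (GSub i j) v = (v = trunc01 (val i - val j))"
| "gate_ok val (GMax i j) v = (v = trunc01 (max (val i) (val j)))"
| "gate_ok val (GMin i j) v = (v = trunc01 (min (val i) (val j)))"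
| "gate_ok val (GScale c i) v = (v = trunc01 (of_rat c * val i))"
| "gate_ok val (GConst c) v = (v = trunc01 (of_rat c))"
| "gate_ok val (GCmp i j) v =
     ((val i > val j \<longrightarrow> v = 1) \<and> (val i < val j \<longrightarrow> v = 0) \<and>
      (val i = val j \<longrightarrow> 0 \<le> v \<and> v \<le> 1))"

definition unit_cube :: "(real^3) set" where
  "unit_cube = {x. \<forall>i. 0 \<le> x $ i \<and> x $ i \<le> 1}"

definition valid_eval :: "circuit \<Rightarrow> real^3 \<Rightarrow> (nat \<Rightarrow> real) \<Rightarrow> bool" where
  "valid_eval C x val \<longleftrightarrow>
     val 0 = x $ 1 \<and> val 1 = x $ 2 \<and> val 2 = x $ 3 \<and>
     (\<forall>k < length (gates C). gate_ok val (gates C ! k) (val (3 + k)))"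

definition circuit_output :: "circuit \<Rightarrow> (nat \<Rightarrow> real) \<Rightarrow> real^3" where
  "circuit_output C val =
     (case outs C of (a, b, c) \<Rightarrow> vector [val a, val b, val c])"

definition computes :: "circuit \<Rightarrow> (real^3 \<Rightarrow> real^3) \<Rightarrow> bool" where
  "computes C F \<longleftrightarrow> wf_circuit C \<and>
     (\<forall>x \<in> unit_cube. (\<exists>val. valid_eval C x val) \<and>
        (\<forall>val. valid_eval C x val \<longrightarrow> circuit_output C val = F x))"

definition bitlen :: "int \<Rightarrow> nat" where
  "bitlen a = nat \<lceil>log 2 (real_of_int \<bar>a\<bar> + 1)\<rceil> + 1"

definition rat_size :: "rat \<Rightarrow> nat" where
  "rat_size r = (case quotient_of r of (a, b) \<Rightarrow> bitlen a + bitlen b)"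

fun gate_size :: "gate \<Rightarrow> nat" where
  "gate_size (GScale c i) = 1 + rat_size c"
| "gate_size (GConst c) = 1 + rat_size c"
| "gate_size g = 1"

definition circuit_size :: "circuit \<Rightarrow> nat" where
  "circuit_size C = sum_list (map gate_size (gates C))"

definition homotopy :: "(real^3 \<Rightarrow> real^3) \<Rightarrow> (real^3 \<Rightarrow> real^3) \<Rightarrow> real \<Rightarrow> real^3 \<Rightarrow> real^3" where
  "homotopy F0 F1 t x = (1 - t) *\<^sub>R F0 x + t *\<^sub>R F1 x"

definition fixpoint_path ::
  "(real^3 \<Rightarrow> real^3) \<Rightarrow> (real^3 \<Rightarrow> real^3) \<Rightarrow> real^3 \<Rightarrow> (real \<Rightarrow> (real^3) \<times> real) \<Rightarrow> bool" where
  "fixpoint_path F0 F1 x0 \<gamma> \<longleftrightarrow>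
     path \<gamma> \<and> pathstart \<gamma> = (x0, 0) \<and> snd (pathfinish \<gamma>) = 1 \<and>
     (\<forall>s \<in> {0..1}. fst (\<gamma> s) \<in> unit_cube \<and> snd (\<gamma> s) \<in> {0..1} \<and>
        homotopy F0 F1 (snd (\<gamma> s)) (fst (\<gamma> s)) = fst (\<gamma> s))"

definition direction_changes_ge :: "(real \<Rightarrow> (real^3) \<times> real) \<Rightarrow> nat \<Rightarrow> bool" where
  "direction_changes_ge \<gamma> m \<longleftrightarrow>
     (\<exists>s :: nat \<Rightarrow> real.
        (\<forall>i \<le> m + 1. 0 \<le> s i \<and> s i \<le> 1) \<and>
        (\<forall>i \<le> m. s i < s (Suc i)) \<and>
        (\<forall>i < m. (snd (\<gamma> (s (Suc i))) - snd (\<gamma> (s i))) *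
                  (snd (\<gamma> (s (Suc (Suc i)))) - snd (\<gamma> (s (Suc i)))) < 0))"

end

theory Submission imports Defs begin

fun gate_fun :: "(nat \<Rightarrow> real) \<Rightarrow> gate \<Rightarrow> real" where
  "gate_fun f (GAdd i j) = trunc01 (f i + f j)"
| "gate_fun f (GSub i j) = trunc01 (f i - f j)"
| "gate_fun f (GMax i j) = trunc01 (max (f i) (f j))"
| "gate_fun f (GMin i j) = trunc01 (min (f i) (f j))"
| "gate_fun f (GScale c i) = trunc01 (of_rat c * f i)"
| "gate_fun f (GConst c) = trunc01 (of_rat c)"
| "gate_fun f (GCmp i j) = 0"

fun is_cmp :: "gate \<Rightarrow> bool" where
  "is_cmp (GCmp i j) = True" | "is_cmp _ = False"

lemma gate_ok_det: "\<not> is_cmp g \<Longrightarrow> gate_ok f g v \<longleftrightarrow> v = gate_fun f g"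
  by (cases g) auto

lemma gate_fun_cong: "(\<And>i. i \<in> set (gate_args g) \<Longrightarrow> f i = f' i) \<Longrightarrow> gate_fun f g = gate_fun f' g"
  by (cases g) auto

fun run :: "real list \<Rightarrow> gate list \<Rightarrow> real list" where
  "run vs [] = vs"
| "run vs (g # gs) = run (vs @ [gate_fun (nth vs) g]) gs"

fun wff :: "nat \<Rightarrow> gate list \<Rightarrow> bool" where
  "wff L [] = True"
| "wff L (g # gs) = ((\<forall>i \<in> set (gate_args g). i < L) \<and> wff (Suc L) gs)"

lemma wff_append: "wff L (a @ b) = (wff L a \<and> wff (L + length a) b)"
  by (induction a arbitrary: L) auto

lemma wff_nth: "wff L gs \<Longrightarrow> k < length gs \<Longrightarrow> i \<in> set (gate_args (gs ! k)) \<Longrightarrow> i < L + k"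
proof (induction gs arbitrary: L k)
  case Nil thus ?case by simp
next
  case (Cons g gs)
  show ?case
  proof (cases k)
    case 0 thus ?thesis using Cons by auto
  next
    case (Suc k') thus ?thesis using Cons.IH[of "Suc L" k'] Cons.prems by auto
  qed
qed

lemma run_append: "run vs (a @ b) = run (run vs a) b"
  by (induction a arbitrary: vs) auto

lemma length_run[simp]: "length (run vs gs) = length vs + length gs"
  by (induction gs arbitrary: vs) auto

lemma run_prefix: "i < length vs \<Longrightarrow> run vs gs ! i = vs ! i"
  by (induction gs arbitrary: vs) (auto simp: nth_append)

lemma run_gate: "k < length gs \<Longrightarrow> wff (length vs) gs \<Longrightarrow>
   run vs gs ! (length vs + k) = gate_fun (nth (run vs gs)) (gs ! k)"
proof (induction gs arbitrary: vs k)
  case Nil thus ?case by simp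
next
  case (Cons g gs)
  show ?case
  proof (cases k)
    case 0
    have "run vs (g # gs) ! length vs = gate_fun (nth vs) g"
      by (simp add: run_prefix)
    also have "\<dots> = gate_fun (nth (run vs (g # gs))) g"
      apply (rule gate_fun_cong)
      using Cons.prems by (subst run_prefix) (auto simp: nth_append)
    finally show ?thesis using 0 by simp
  next
    case (Suc k')
    have "run vs (g # gs) ! (length vs + k) = run (vs @ [gate_fun (nth vs) g]) gs ! (length (vs @ [gate_fun (nth vs) g]) + k')"
      using Suc by simp
    also have "\<dots> = gate_fun (nth (run (vs @ [gate_fun (nth vs) g]) gs)) (gs ! k')"
      using Cons.IH[of k' "vs @ [gate_fun (nth vs) g]"] Cons.prems Suc by simp
    finally show ?thesis using Suc by simp
  qed
qed

lemma computes_generic: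
  assumes w: "wff 3 (gates C)" and nc: "\<forall>g \<in> set (gates C). \<not> is_cmp g"
    and o: "outs C = (a, b, c)" "a < 3 + length (gates C)" "b < 3 + length (gates C)" "c < 3 + length (gates C)"
    and F: "\<And>x. x \<in> unit_cube \<Longrightarrow> F x = (let vs = run [x$1, x$2, x$3] (gates C) in vector [vs!a, vs!b, vs!c])"
  shows "computes C F"
  unfolding computes_def
proof (intro conjI ballI)
  show "wf_circuit C" unfolding wf_circuit_def using wff_nth[OF w] o by auto
next
  fix x :: "real^3" assume x: "x \<in> unit_cube"
  define vs where "vs = run [x$1, x$2, x$3] (gates C)"
  have g: "vs ! (3 + k) = gate_fun (nth vs) (gates C ! k)" if "k < length (gates C)" for k
    using run_gate[of k "gates C" "[x$1, x$2, x$3]"] that w unfolding vs_def by (simp add: numeral_3_eq_3)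
  have v: "valid_eval C x (nth vs)"
    unfolding valid_eval_def using g nc
    by (auto simp: vs_def run_prefix gate_ok_det)
  thus "\<exists>val. valid_eval C x val" by blast
  show "\<forall>val. valid_eval C x val \<longrightarrow> circuit_output C val = F x"
  proof (intro allI impI)
    fix val assume ve: "valid_eval C x val"
    have eq: "i < 3 + length (gates C) \<Longrightarrow> val i = vs ! i" for i
    proof (induction i rule: less_induct)
      case (less i)
      show ?case
      proof (cases "i < 3")
        case True
        then consider "i = 0" | "i = 1" | "i = 2" by linarith
        thus ?thesis using ve unfolding valid_eval_def by cases (auto simp: vs_def run_prefix)
      next
        case False
        define k where "k = i - 3"
        have i: "i = 3 + k" and k: "k < length (gates C)" using False less.prems k_def by auto
        have "gate_ok val (gates C ! k) (val i)" using ve k i unfolding valid_eval_def by auto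
        hence "val i = gate_fun val (gates C ! k)" using nc k by (simp add: gate_ok_det)
        also have "\<dots> = gate_fun (nth vs) (gates C ! k)"
          apply (rule gate_fun_cong)
          subgoal for j
            apply (rule less.IH)
            using wff_nth[OF w k, of j] i k by auto
          done
        also have "\<dots> = vs ! i" using g k i by simp
        finally show ?thesis .
      qed
    qed
    show "circuit_output C val = F x"
      unfolding circuit_output_def using o eq F[OF x] by (simp add: vs_def Let_def)
  qed
qed


definition T :: "real \<Rightarrow> real" where "T x = min (2*x) (2 - 2*x)"

fun block :: "nat \<Rightarrow> gate list" where
  "block k = [GAdd (4+4*k) (4+4*k), GSub 3 (4+4*k), GAdd (6+4*k) (6+4*k), GMin (5+4*k) (7+4*k)]"

fun tents :: "nat \<Rightarrow> nat \<Rightarrow> gate list" where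
  "tents k 0 = []"
| "tents k (Suc N) = block k @ tents (Suc k) N"

definition suffix :: "nat \<Rightarrow> gate list" where
  "suffix L = [GSub 3 1, GMin (L-1) L, GMax (L+1) 1, GSub 0 (L+2), GSub (L+2) 0,
               GAdd 1 (L+3), GSub (L+5) (L+4), GSub 0 0]"

definition gs :: "nat \<Rightarrow> gate list" where
  "gs N = [GConst 1, GMax 1 1] @ tents 0 N @ suffix (5 + 4*N)"

lemma T_range: "0 \<le> y \<Longrightarrow> y \<le> 1 \<Longrightarrow> 0 \<le> T y \<and> T y \<le> 1"
  by (auto simp: T_def)

lemma Tn_range: "0 \<le> y \<Longrightarrow> y \<le> 1 \<Longrightarrow> 0 \<le> (T^^N) y \<and> (T^^N) y \<le> 1"
  by (induction N) (auto simp: T_range)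

lemma length_tents[simp]: "length (tents k N) = 4 * N"
  by (induction N arbitrary: k) auto

lemma run_block:
  assumes "length vs = 5 + 4*k" "vs ! 3 = 1" "vs ! (4+4*k) = y" "0 \<le> y" "y \<le> 1"
  shows "run vs (block k) = vs @ [trunc01 (y+y), trunc01 (1 - y), trunc01 (trunc01 (1 - y) + trunc01 (1 - y)), T y]"
proof -
  have e: "trunc01 (min (trunc01 (y+y)) (trunc01 (trunc01 (1 - y) + trunc01 (1 - y)))) = T y"
    using assms(4,5) by (simp add: trunc01_def T_def)
  show ?thesis using assms e by (simp add: nth_append)
qed

lemma run_tents:
  assumes "length vs = 5 + 4*k" "vs ! 3 = 1" "vs ! (4+4*k) = y" "0 \<le> y" "y \<le> 1"
  shows "run vs (tents k N) ! (4 + 4*(k+N)) = (T^^N) y"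
  using assms
proof (induction N arbitrary: k vs y)
  case 0 thus ?case by simp
next
  case (Suc N)
  define ws where "ws = run vs (block k)"
  have ws: "ws = vs @ [trunc01 (y+y), trunc01 (1 - y), trunc01 (trunc01 (1 - y) + trunc01 (1 - y)), T y]"
    unfolding ws_def using run_block Suc.prems by blast
  have "run vs (tents k (Suc N)) = run ws (tents (Suc k) N)" by (simp add: run_append ws_def)
  moreover have "run ws (tents (Suc k) N) ! (4 + 4*(Suc k + N)) = (T^^N) (T y)"
    apply (rule Suc.IH)
    using Suc.prems T_range[of y] by (auto simp: ws nth_append)
  moreover have "(T^^Suc N) y = (T^^N) (T y)" by (simp only: funpow_Suc_right comp_apply)
  ultimately show ?case by simp
qed

definition phi :: "nat \<Rightarrow> real \<Rightarrow> real" where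
  "phi N b = trunc01 (max (trunc01 (min ((T^^N) b) (trunc01 (1-b)))) b)"

definition G :: "nat \<Rightarrow> real \<Rightarrow> real \<Rightarrow> real" where
  "G N a b = trunc01 (trunc01 (b + trunc01 (a - phi N b)) - trunc01 (phi N b - a))"

lemma run_suffix:
  assumes "length ws = L" "L \<ge> 5" "ws ! 0 = a" "ws ! 1 = b" "ws ! 3 = 1" "ws ! (L - 1) = z"
  shows "run ws (suffix L) ! (L + 6) = trunc01 (trunc01 (b + trunc01 (a - trunc01 (max (trunc01 (min z (trunc01 (1-b)))) b))) - trunc01 (trunc01 (max (trunc01 (min z (trunc01 (1-b)))) b) - a))"
    and "run ws (suffix L) ! (L + 7) = 0"
  using assms by (simp_all add: suffix_def nth_append trunc01_def[of 0])


lemma wff_tents: "wff (5 + 4*k) (tents k N)"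
proof (induction N arbitrary: k)
  case 0 thus ?case by simp
next
  case (Suc N)
  have "wff (5 + 4 * Suc k) (tents (Suc k) N)" by (rule Suc.IH)
  thus ?case by (simp add: wff_append)
qed

lemma nocmp_tents: "\<forall>g \<in> set (tents k N). \<not> is_cmp g"
  by (induction N arbitrary: k) auto

lemma wff_gs: "wff 3 (gs N)"
  unfolding gs_def using wff_tents[of 0 N] by (simp add: wff_append suffix_def)

lemma nocmp_gs: "\<forall>g \<in> set (gs N). \<not> is_cmp g"
  unfolding gs_def using nocmp_tents[of 0 N] by (auto simp: suffix_def)

lemma length_gs: "length (gs N) = 10 + 4*N"
  by (simp add: gs_def suffix_def)

lemma run_gs:
  assumes "0 \<le> b" "b \<le> 1"
  shows "run [a, b, c] (gs N) ! (11 + 4*N) = G N a b"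
    "run [a, b, c] (gs N) ! (12 + 4*N) = 0"
    "run [a, b, c] (gs N) ! 3 = 1"
proof -
  define ws1 where "ws1 = run [a, b, c] [GConst 1, GMax 1 1]"
  have ws1: "ws1 = [a, b, c, 1, b]" unfolding ws1_def using assms by (simp add: trunc01_def)
  define ws2 where "ws2 = run ws1 (tents 0 N)"
  have l2: "length ws2 = 5 + 4*N" by (simp add: ws2_def ws1)
  have w0: "ws2 ! 0 = a" "ws2 ! 1 = b" "ws2 ! 3 = 1" by (simp_all add: ws2_def run_prefix ws1)
  have w4: "ws2 ! (5 + 4*N - 1) = (T^^N) b"
    using run_tents[of ws1 0 b N] assms by (simp add: ws2_def ws1)
  have r: "run [a, b, c] (gs N) = run ws2 (suffix (5 + 4*N))"
    by (simp add: gs_def run_append ws1_def ws2_def)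
  show "run [a, b, c] (gs N) ! (11 + 4*N) = G N a b"
    using run_suffix(1)[OF l2 _ w0 w4] by (simp add: r G_def phi_def add.commute add.left_commute)
  show "run [a, b, c] (gs N) ! (12 + 4*N) = 0"
    using run_suffix(2)[OF l2 _ w0 w4] by (simp add: r add.commute add.left_commute)
  show "run [a, b, c] (gs N) ! 3 = 1"
    using w0 by (simp add: r run_prefix l2)
qed

definition C0 :: "nat \<Rightarrow> circuit" where "C0 N = \<lparr>gates = gs N, outs = (12 + 4*N, 11 + 4*N, 12 + 4*N)\<rparr>"
definition C1 :: "nat \<Rightarrow> circuit" where "C1 N = \<lparr>gates = gs N, outs = (3, 11 + 4*N, 12 + 4*N)\<rparr>"
definition F0 :: "nat \<Rightarrow> real^3 \<Rightarrow> real^3" where "F0 N x = vector [0, G N (x$1) (x$2), 0]"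
definition F1 :: "nat \<Rightarrow> real^3 \<Rightarrow> real^3" where "F1 N x = vector [1, G N (x$1) (x$2), 0]"

lemma computes_C0: "computes (C0 N) (F0 N)"
  apply (rule computes_generic[where a = "12 + 4*N" and b = "11 + 4*N" and c = "12 + 4*N"])
  using wff_gs nocmp_gs run_gs
  by (auto simp: C0_def F0_def length_gs unit_cube_def Let_def)

lemma computes_C1: "computes (C1 N) (F1 N)"
  apply (rule computes_generic[where a = "3" and b = "11 + 4*N" and c = "12 + 4*N"])
  using wff_gs nocmp_gs run_gs
  by (auto simp: C1_def F1_def length_gs unit_cube_def Let_def)

lemma size_gs: "circuit_size (C0 N) = 14 + 4*N" "circuit_size (C1 N) = 14 + 4*N"
proof -
  have t: "sum_list (map gate_size (tents k N)) = 4 * N" for k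
    by (induction N arbitrary: k) auto
  have q: "quotient_of 1 = (1, 1)" by simp
  have "rat_size 1 = 4" by (simp add: rat_size_def q bitlen_def)
  thus "circuit_size (C0 N) = 14 + 4*N" "circuit_size (C1 N) = 14 + 4*N"
    by (simp_all add: circuit_size_def C0_def C1_def gs_def suffix_def t)
qed


lemma Tn_0: "(T^^N) 0 = 0"
  by (induction N) (auto simp: T_def)

lemma phi_eq: "0 \<le> b \<Longrightarrow> b \<le> 1 \<Longrightarrow> phi N b = max (min ((T^^N) b) (1-b)) b"
  using Tn_range[of b N] by (auto simp: phi_def trunc01_def)

lemma phi_props:
  assumes "0 \<le> b" "b \<le> 1"
  shows "b \<le> phi N b" "phi N b \<le> 1" "b < 1 \<Longrightarrow> phi N b < 1" "b = 0 \<Longrightarrow> phi N b = 0"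
  using phi_eq[OF assms, of N] Tn_range[of b N] assms Tn_0[of N] by (auto simp: min_less_iff_disj)

lemma G_fix:
  assumes "0 \<le> a" "a \<le> 1" "0 \<le> b" "b \<le> 1"
  shows "G N a b = b \<longleftrightarrow> a = phi N b"
proof -
  define p where "p = phi N b"
  have p: "b \<le> p" "p \<le> 1" "b < 1 \<Longrightarrow> p < 1" "b = 0 \<Longrightarrow> p = 0"
    using phi_props[OF assms(3,4), of N] unfolding p_def by auto
  have "G N a b = trunc01 (trunc01 (b + trunc01 (a - p)) - trunc01 (p - a))"
    by (simp add: G_def p_def)
  moreover have "trunc01 (trunc01 (b + trunc01 (a - p)) - trunc01 (p - a)) = b \<longleftrightarrow> a = p"
  proof (cases "p \<le> a")
    case True
    have e: "trunc01 (p - a) = 0" "trunc01 (a - p) = a - p" using True assms p by (auto simp: trunc01_def)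
    have "trunc01 (trunc01 (b + (a - p)) - 0) = b \<longleftrightarrow> a = p"
      using True assms p by (auto simp: trunc01_def max_def min_def)
    thus ?thesis by (simp add: e)
  next
    case False
    have e: "trunc01 (a - p) = 0" "trunc01 (p - a) = p - a" "trunc01 b = b"
      using False assms p by (auto simp: trunc01_def)
    have "trunc01 (b - (p - a)) \<noteq> b"
      using False assms p by (auto simp: trunc01_def max_def min_def)
    thus ?thesis using False by (simp add: e)
  qed
  ultimately show ?thesis by (simp add: p_def)
qed

lemma Tn_dyadic: "k \<le> 2^N \<Longrightarrow> (T^^N) (real k / 2^N) = (if even k then 0 else 1)"
proof (induction N arbitrary: k)
  case 0
  then have "k = 0 \<or> k = 1" by auto
  thus ?case by auto
next
  case (Suc N)
  have e: "(T^^Suc N) y = (T^^N) (T y)" for y by (simp only: funpow_Suc_right comp_apply)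
  show ?case
  proof (cases "k \<le> 2^N")
    case True
    have "T (real k / 2^Suc N) = real k / 2^N"
      using True unfolding T_def by (auto simp: min_def field_simps)
    thus ?thesis using Suc.IH[OF True] e by simp
  next
    case False
    define k' where "k' = 2^Suc N - k"
    have k': "k' \<le> 2^N" "real k' = 2^Suc N - real k" using False Suc.prems by (auto simp: k'_def of_nat_diff)
    have "T (real k / 2^Suc N) = real k' / 2^N"
      using False Suc.prems k' unfolding T_def by (auto simp: min_def field_simps)
    moreover have "even k' = even k" using Suc.prems by (auto simp: k'_def)
    ultimately show ?thesis using Suc.IH[OF k'(1)] e by simp
  qed
qed

lemma isCont_Tn: "isCont (T^^N) x"
proof (induction N arbitrary: x)
  case 0 thus ?case by simp
next
  case (Suc N)
  have "isCont T y" for y unfolding T_def by (intro continuous_intros)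
  hence "isCont (\<lambda>x. T ((T^^N) x)) x" by (intro isCont_o2[OF Suc.IH])
  thus ?case by (simp add: o_def)
qed

lemma cont_Tn: "continuous_on S (\<lambda>x. (T^^N) (f x))" if "continuous_on S f"
  using continuous_on_compose2[OF continuous_at_imp_continuous_on[OF ballI[OF isCont_Tn]] that]
  by auto

lemma cont_trunc: "continuous_on S f \<Longrightarrow> continuous_on S (\<lambda>x. trunc01 (f x))"
  unfolding trunc01_def by (intro continuous_intros)

lemma cont_phi: "continuous_on S f \<Longrightarrow> continuous_on S (\<lambda>x. phi N (f x))"
  unfolding phi_def by (intro cont_trunc continuous_intros cont_Tn)

lemma cont_G: "continuous_on S f \<Longrightarrow> continuous_on S g \<Longrightarrow> continuous_on S (\<lambda>x. G N (f x) (g x))"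
  unfolding G_def by (intro cont_trunc continuous_intros cont_phi)

lemma vector3_chi: "(vector [p, q, r] :: real^3) = (\<chi> i. if i = 1 then p else if i = 2 then q else r)"
  by (simp add: vec_eq_iff forall_3)

lemma cont_F0: "continuous_on S (F0 N)"
  unfolding F0_def vector3_chi
  apply (rule continuous_on_vec_lambda)
  subgoal for i by (cases "i = 1"; cases "i = 2"; simp add: cont_G continuous_on_component continuous_on_id)
  done

lemma cont_F1: "continuous_on S (F1 N)"
  unfolding F1_def vector3_chi
  apply (rule continuous_on_vec_lambda)
  subgoal for i by (cases "i = 1"; cases "i = 2"; simp add: cont_G continuous_on_component continuous_on_id)
  done


lemma hom_comp:
  "homotopy (F0 N) (F1 N) t x $ 1 = t"
  "homotopy (F0 N) (F1 N) t x $ 2 = G N (x$1) (x$2)"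
  "homotopy (F0 N) (F1 N) t x $ 3 = 0"
  by (simp_all add: homotopy_def F0_def F1_def algebra_simps)

lemma fix_iff:
  assumes "x \<in> unit_cube"
  shows "homotopy (F0 N) (F1 N) t x = x \<longleftrightarrow> x$1 = t \<and> x$3 = 0 \<and> x$1 = phi N (x$2)"
proof -
  have r: "0 \<le> x$i" "x$i \<le> 1" for i using assms by (auto simp: unit_cube_def)
  show ?thesis
    unfolding vec_eq_iff forall_3 hom_comp using G_fix[OF r(1,2)[of 1] r(1,2)[of 2], of N] by auto
qed

lemma vec0: "(vector [0, 0, 0] :: real^3) = 0"
  by (simp add: vec_eq_iff forall_3)

lemma cont_vec3: "continuous_on S f \<Longrightarrow> continuous_on S g \<Longrightarrow> continuous_on S h \<Longrightarrow>
   continuous_on S (\<lambda>x. vector [f x, g x, h x] :: real^3)"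
  unfolding vector3_chi
  apply (rule continuous_on_vec_lambda)
  subgoal for i by (cases "i = 1"; cases "i = 2"; simp)
  done

lemma F0_unique:
  assumes "y \<in> unit_cube" "F0 N y = y" shows "y = 0"
proof -
  have r: "0 \<le> y$i" "y$i \<le> 1" for i using assms by (auto simp: unit_cube_def)
  have e: "y$1 = 0" "y$3 = 0" "G N 0 (y$2) = y$2"
    using assms(2) unfolding vec_eq_iff forall_3 F0_def by auto
  hence "0 = phi N (y$2)" using G_fix[of 0 "y$2" N] r by auto
  hence "y$2 = 0" using phi_props(1)[of "y$2" N] r(1)[of 2] r(2)[of 2] by linarith
  thus ?thesis using e by (simp add: vec_eq_iff forall_3)
qed

lemma F0_zero: "F0 N 0 = 0"
proof -
  have "G N 0 0 = 0" using G_fix[of 0 0 N] phi_props(4)[of 0 N] by auto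
  thus ?thesis by (simp add: F0_def vec0)
qed

lemma path_exists: "fixpoint_path (F0 N) (F1 N) 0 (\<lambda>s. (vector [phi N s, s, 0], phi N s))"
  unfolding fixpoint_path_def
proof (intro conjI ballI)
  show "path (\<lambda>s. (vector [phi N s, s, 0] :: real^3, phi N s))"
    unfolding path_def
    by (intro continuous_on_Pair cont_vec3 cont_phi continuous_on_id continuous_on_const)
  show "pathstart (\<lambda>s. (vector [phi N s, s, 0] :: real^3, phi N s)) = (0, 0)"
    using phi_props(4)[of 0 N] by (simp add: pathstart_def vec0)
  show "snd (pathfinish (\<lambda>s. (vector [phi N s, s, 0] :: real^3, phi N s))) = 1"
    using phi_props(1,2)[of 1 N] by (simp add: pathfinish_def)
  fix s :: real assume s: "s \<in> {0..1}"
  have p: "0 \<le> phi N s" "phi N s \<le> 1" using phi_props(1,2)[of s N] s by auto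
  show c: "fst (vector [phi N s, s, 0] :: real^3, phi N s) \<in> unit_cube"
    unfolding unit_cube_def using p s by (simp add: forall_3)
  show "snd (vector [phi N s, s, 0] :: real^3, phi N s) \<in> {0..1}" using p by simp
  show "homotopy (F0 N) (F1 N) (snd (vector [phi N s, s, 0] :: real^3, phi N s)) (fst (vector [phi N s, s, 0], phi N s)) =
    fst (vector [phi N s, s, 0], phi N s)"
    using fix_iff[OF c] by simp
qed


lemma phi_dyadic:
  assumes "i \<le> 2^(n+1)"
  shows "phi (n+3) (real i / 2^(n+3)) = (if even i then real i / 2^(n+3) else 1 - real i / 2^(n+3))"
    and "real i / 2^(n+3) \<le> 1/4" "0 \<le> real i / 2^(n+3)"
proof -
  have p: "(2::real)^(n+3) = 4 * 2^(n+1)" by (simp add: power_add)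
  have "real i \<le> 2^(n+1)" using assms by (metis of_nat_le_iff of_nat_numeral of_nat_power)
  thus b: "real i / 2^(n+3) \<le> 1/4" by (simp add: p field_simps)
  show b0: "0 \<le> real i / 2^(n+3)" by simp
  have i: "i \<le> 2^(n+3)" using assms by (simp add: power_add)
  show "phi (n+3) (real i / 2^(n+3)) = (if even i then real i / 2^(n+3) else 1 - real i / 2^(n+3))"
    using phi_eq[OF b0, of "n+3"] b Tn_dyadic[OF i] i by auto
qed

lemma dir_changes:
  assumes fp: "fixpoint_path (F0 (n+3)) (F1 (n+3)) 0 \<gamma>"
  shows "direction_changes_ge \<gamma> (2^(n+1) - 1)"
proof -
  let ?N = "n+3"
  define \<beta> where "\<beta> s = fst (\<gamma> s) $ 2" for s
  have pc: "continuous_on {0..1} \<gamma>" using fp by (simp add: fixpoint_path_def path_def)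
  have bc: "continuous_on {0..1} \<beta>" unfolding \<beta>_def
    by (intro continuous_on_component continuous_on_fst pc)
  have fx: "s \<in> {0..1} \<Longrightarrow> 0 \<le> \<beta> s \<and> \<beta> s \<le> 1 \<and> snd (\<gamma> s) = phi ?N (\<beta> s)" for s
  proof -
    assume s: "s \<in> {0..1}"
    have c: "fst (\<gamma> s) \<in> unit_cube" and h: "homotopy (F0 ?N) (F1 ?N) (snd (\<gamma> s)) (fst (\<gamma> s)) = fst (\<gamma> s)"
      using fp s unfolding fixpoint_path_def by auto
    show ?thesis using fix_iff[OF c] h c unfolding \<beta>_def unit_cube_def by auto
  qed
  have b0: "\<beta> 0 = 0" using fp by (simp add: fixpoint_path_def pathstart_def \<beta>_def)
  have b1: "\<beta> 1 = 1"
  proof -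
    have "snd (\<gamma> 1) = 1" using fp by (simp add: fixpoint_path_def pathfinish_def)
    hence "phi ?N (\<beta> 1) = 1" using fx[of 1] by simp
    thus ?thesis using fx[of 1] phi_props(3)[of "\<beta> 1" ?N] by fastforce
  qed
  define S where "S y = {0..1} \<inter> \<beta> -` {y..}" for y
  define h where "h y = Inf (S y)" for y
  have hS: "y \<in> {0..1} \<Longrightarrow> h y \<in> S y" for y
  proof -
    assume y: "y \<in> {0..1}"
    have "closed (S y)" unfolding S_def by (rule continuous_closed_preimage[OF bc]) auto
    moreover have "1 \<in> S y" using y b1 by (simp add: S_def)
    moreover have "bdd_below (S y)" unfolding S_def by (rule bdd_belowI[of _ 0]) auto
    ultimately show ?thesis unfolding h_def by (intro closed_contains_Inf) auto
  qed
  have hl: "s \<in> S y \<Longrightarrow> h y \<le> s" for s y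
    unfolding h_def by (rule cInf_lower) (auto simp: S_def intro: bdd_belowI[of _ 0])
  have hv: "y \<in> {0..1} \<Longrightarrow> h y \<in> {0..1} \<and> \<beta> (h y) = y" for y
  proof -
    assume y: "y \<in> {0..1}"
    have hy: "h y \<in> {0..1}" "y \<le> \<beta> (h y)" using hS[OF y] by (auto simp: S_def)
    have "\<not> y < \<beta> (h y)"
    proof
      assume lt: "y < \<beta> (h y)"
      have "continuous_on {0..h y} \<beta>" by (rule continuous_on_subset[OF bc]) (use hy(1) in auto)
      then obtain x where x: "0 \<le> x" "x \<le> h y" "\<beta> x = y"
        using IVT'[of \<beta> 0 y "h y"] b0 y lt hy by auto
      have "x \<in> S y" using x hy by (auto simp: S_def)
      hence "h y \<le> x" by (rule hl)
      thus False using x lt by auto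
    qed
    thus ?thesis using hy by auto
  qed
  have hmono: "y \<in> {0..1} \<Longrightarrow> y' \<in> {0..1} \<Longrightarrow> y < y' \<Longrightarrow> h y < h y'" for y y'
  proof -
    assume y: "y \<in> {0..1}" and y': "y' \<in> {0..1}" and lt: "y < y'"
    have "h y' \<in> S y" using hv[OF y'] lt by (auto simp: S_def)
    hence "h y \<le> h y'" by (rule hl)
    moreover have "h y \<noteq> h y'" using hv[OF y] hv[OF y'] lt by auto
    ultimately show ?thesis by simp
  qed
  define m :: nat where "m = 2^(n+1) - 1"
  have m1: "m + 1 = 2^(n+1)" unfolding m_def by simp
  define b where "b i = real i / 2^?N" for i
  define s where "s i = h (b i)" for i
  have p8: "(2::nat)^(n+1) \<le> 2^(n+3)" by (rule power_increasing) auto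
  have bi: "i \<le> m + 1 \<Longrightarrow> b i \<in> {0..1}" for i
    using phi_dyadic(2,3)[of i n] m1 p8 unfolding b_def by auto
  have tv: "i \<le> m + 1 \<Longrightarrow> snd (\<gamma> (s i)) = (if even i then b i else 1 - b i)" for i
    using fx[of "s i"] hv[OF bi[of i]] phi_dyadic(1)[of i n] m1 p8 unfolding s_def b_def by auto
  have bq: "i \<le> m + 1 \<Longrightarrow> b i \<le> 1/4" for i
    using phi_dyadic(2)[of i n] m1 unfolding b_def by auto
  show ?thesis
    unfolding direction_changes_ge_def m_def[symmetric]
  proof (intro exI[of _ s] conjI allI impI)
    fix i assume "i \<le> m + 1"
    thus "0 \<le> s i" "s i \<le> 1" using hv[OF bi] unfolding s_def by auto
  next
    fix i assume i: "i \<le> m"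
    show "s i < s (Suc i)" unfolding s_def
      by (rule hmono) (use bi[of i] bi[of "Suc i"] i in \<open>auto simp: b_def divide_strict_right_mono\<close>)
  next
    fix i assume i: "i < m"
    have t0: "snd (\<gamma> (s i)) = (if even i then b i else 1 - b i)" using tv i by simp
    have t1: "snd (\<gamma> (s (Suc i))) = (if even i then 1 - b (Suc i) else b (Suc i))" using tv[of "Suc i"] i by simp
    have t2: "snd (\<gamma> (s (Suc (Suc i)))) = (if even i then b (Suc (Suc i)) else 1 - b (Suc (Suc i)))" using tv[of "Suc (Suc i)"] i by simp
    have q: "b i \<le> 1/4" "b (Suc i) \<le> 1/4" "b (Suc (Suc i)) \<le> 1/4" using bq i by auto
    have q0: "0 \<le> b i" "0 \<le> b (Suc i)" "0 \<le> b (Suc (Suc i))" using bi i by auto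
    show "(snd (\<gamma> (s (Suc i))) - snd (\<gamma> (s i))) * (snd (\<gamma> (s (Suc (Suc i)))) - snd (\<gamma> (s (Suc i)))) < 0"
    proof (cases "even i")
      case True thus ?thesis using t0 t1 t2 q q0 by (simp add: mult_pos_neg)
    next
      case False thus ?thesis using t0 t1 t2 q q0 by (simp add: mult_neg_pos)
    qed
  qed
qed


lemma size_bound: fixes n :: nat shows "14 + 4 * (n + 3) \<le> (n + 2) ^ 5"
proof -
  have a: "(2::nat)^4 \<le> (n+2)^4" by (rule power_mono) auto
  have e: "(n+2)^5 = (n+2)*(n+2)^4" by (simp add: power_Suc[symmetric] del: power_Suc)
  have "(n+2) * 16 \<le> (n+2) * (n+2)^4" by (rule mult_le_mono2) (use a in simp)
  moreover have "14 + 4 * (n + 3) \<le> (n+2) * 16" by simp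
  ultimately show ?thesis unfolding e by linarith
qed

theorem theorem8:
  shows "\<exists>c > (0::real). \<exists>d :: nat. \<forall>n :: nat.
     \<exists>C0 C1 :: circuit. \<exists>F0 F1 :: real^3 \<Rightarrow> real^3. \<exists>x0 :: real^3.
       computes C0 F0 \<and> computes C1 F1 \<and>
       circuit_size C0 \<le> (n + 2) ^ d \<and> circuit_size C1 \<le> (n + 2) ^ d \<and>
       continuous_on unit_cube F0 \<and> continuous_on unit_cube F1 \<and>
       x0 \<in> unit_cube \<and> F0 x0 = x0 \<and> (\<forall>y \<in> unit_cube. F0 y = y \<longrightarrow> y = x0) \<and>
       (\<exists>\<gamma>. fixpoint_path F0 F1 x0 \<gamma>) \<and>
       (\<forall>\<gamma>. fixpoint_path F0 F1 x0 \<gamma> \<longrightarrow>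
          (\<exists>m. direction_changes_ge \<gamma> m \<and> real m \<ge> 2 powr (c * real n)))"
proof (rule exI[of _ 1], rule conjI, simp, rule exI[of _ 5], rule allI)
  fix n :: nat
  let ?N = "n + 3"
  have m: "2 powr (1 * real n) \<le> real (2^(n+1) - 1 :: nat)"
  proof -
    have "(1::nat) \<le> 2^(n+1)" by simp
    hence "real (2^(n+1) - 1 :: nat) = 2 * 2^n - 1" by (simp add: of_nat_diff)
    moreover have "(1::real) \<le> 2^n" by simp
    ultimately show ?thesis by (simp add: powr_realpow)
  qed
  show "\<exists>C0 C1 :: circuit. \<exists>F0 F1 :: real^3 \<Rightarrow> real^3. \<exists>x0 :: real^3.
       computes C0 F0 \<and> computes C1 F1 \<and>
       circuit_size C0 \<le> (n + 2) ^ 5 \<and> circuit_size C1 \<le> (n + 2) ^ 5 \<and>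
       continuous_on unit_cube F0 \<and> continuous_on unit_cube F1 \<and>
       x0 \<in> unit_cube \<and> F0 x0 = x0 \<and> (\<forall>y \<in> unit_cube. F0 y = y \<longrightarrow> y = x0) \<and>
       (\<exists>\<gamma>. fixpoint_path F0 F1 x0 \<gamma>) \<and>
       (\<forall>\<gamma>. fixpoint_path F0 F1 x0 \<gamma> \<longrightarrow>
          (\<exists>m. direction_changes_ge \<gamma> m \<and> real m \<ge> 2 powr (1 * real n)))"
  proof -
    have dc: "\<forall>\<gamma>. fixpoint_path (F0 ?N) (F1 ?N) 0 \<gamma> \<longrightarrow>
          (\<exists>m. direction_changes_ge \<gamma> m \<and> real m \<ge> 2 powr (1 * real n))"
    proof (intro allI impI)
      fix \<gamma> assume "fixpoint_path (F0 ?N) (F1 ?N) 0 \<gamma>"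
      thus "\<exists>m. direction_changes_ge \<gamma> m \<and> real m \<ge> 2 powr (1 * real n)"
        using dir_changes[of n \<gamma>] m by blast
    qed
    show ?thesis
    apply (rule exI[of _ "C0 ?N"], rule exI[of _ "C1 ?N"], rule exI[of _ "F0 ?N"], rule exI[of _ "F1 ?N"], rule exI[of _ 0])
    using computes_C0[of ?N] computes_C1[of ?N] size_gs[of ?N] size_bound[of n]
      cont_F0[of unit_cube ?N] cont_F1[of unit_cube ?N] F0_zero[of ?N] F0_unique[of _ ?N]
      path_exists[of ?N] dc
    by (auto simp: unit_cube_def)
  qed
qed

end
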